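(* Let $w$ be a positive integer, let $\lambda_0<\lambda_1<\cdots<\lambda_w$ be real numbers with $\lambda_w=\lambda_0+1$, and let $b_0,b_1,\ldots,b_{w-1}$ be integers such that $b_{k-1}\neq b_k$ for $k=1,\ldots,w-1$ and $1+b_{w-1}\neq b_0$. Let \[K'=\bigcup_{k=0}^{w-1}[b_k+\lambda_k,\, b_k+\lambda_{k+1}].\] Then $K'$ is an $\mathcal{N}$-set, and \[(K'-K')\cap\mathbb{N}=\{|b_k-b_{k-1}| : k=1,\ldots,w-1\}\cup\{|1+b_{w-1}-b_0|\},\] which is a finite set of relatively prime positive integers.
   Context: $\mathbb{N}$ denotes the set of positive integers. $K-K=\{x-y : x,y\in K\}$. A set of integers is relatively prime if it is nonempty and its elements have no common factor greater than $1$. An $\mathcal{N}$-set in $\mathbb{R}^n$ is a compact set $K\subseteq\mathbb{R}^n$ such that for every $x\in\mathbb{R}^n$ there exists $y\in K$ with $x-y\in\mathbb{Z}^n$. *)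

theory Defs
  imports "HOL-Analysis.Analysis"
begin

definition diff_set :: "'a::ab_group_add set \<Rightarrow> 'a set" where
  "diff_set K = {x - y | x y. x \<in> K \<and> y \<in> K}"

text \<open>N-set in R^n (here R^n is any Euclidean space, Z^n = points with integer
  coordinates w.r.t. the standard basis).\<close>
definition N_set :: "'a::euclidean_space set \<Rightarrow> bool" where
  "N_set K \<longleftrightarrow> compact K \<and>
     (\<forall>x. \<exists>y\<in>K. \<forall>i\<in>Basis. (x - y) \<bullet> i \<in> \<int>)"

definition rel_prime_set :: "int set \<Rightarrow> bool" where
  "rel_prime_set S \<longleftrightarrow> S \<noteq> {} \<and> (\<forall>d::int. d > 1 \<longrightarrow> \<not> (\<forall>s\<in>S. d dvd s))"

end

theory Submission
  imports Defs
begin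

lemma lam_mono:
  fixes lam :: "nat \<Rightarrow> real"
  assumes "\<forall>k<w. lam k < lam (k + 1)" "i < j" "j \<le> w"
  shows "lam i < lam j"
  using assms(2,3)
proof (induction j)
  case 0 then show ?case by simp
next
  case (Suc j)
  have s: "lam j < lam (Suc j)" using assms(1) Suc.prems by simp
  show ?case
  proof (cases "i = j")
    case True then show ?thesis using s by simp
  next
    case False then show ?thesis using Suc s by simp
  qed
qed

lemma lam_le:
  fixes lam :: "nat \<Rightarrow> real"
  assumes "\<forall>k<w. lam k < lam (k + 1)" "i \<le> j" "j \<le> w"
  shows "lam i \<le> lam j"
  using lam_mono[OF assms(1)] assms(2,3) by (cases "i = j") (auto intro: less_imp_le)

lemma lam_inj:
  fixes lam :: "nat \<Rightarrow> real"
  assumes "\<forall>k<w. lam k < lam (k + 1)" "i \<le> w" "j \<le> w" "lam i = lam j"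
  shows "i = j"
  using lam_mono[OF assms(1), of i j] lam_mono[OF assms(1), of j i] assms(2-4)
  by (metis less_irrefl nat_neq_iff)

theorem mainTheorem3:
  fixes w :: nat and lam :: "nat \<Rightarrow> real" and b :: "nat \<Rightarrow> int"
    and K' :: "real set"
  assumes "w > 0"
    and "\<forall>k<w. lam k < lam (k + 1)"
    and "lam w = lam 0 + 1"
    and "\<forall>k\<in>{1..<w}. b (k - 1) \<noteq> b k"
    and "1 + b (w - 1) \<noteq> b 0"
    and "K' = (\<Union>k<w. {real_of_int (b k) + lam k .. real_of_int (b k) + lam (k + 1)})"
  shows "N_set K' \<and>
         {n::int. n > 0 \<and> real_of_int n \<in> diff_set K'} =
           {\<bar>b k - b (k - 1)\<bar> | k. k \<in> {1..<w}} \<union> {\<bar>1 + b (w - 1) - b 0\<bar>} \<and>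
         finite ({\<bar>b k - b (k - 1)\<bar> | k. k \<in> {1..<w}} \<union> {\<bar>1 + b (w - 1) - b 0\<bar>}) \<and>
         rel_prime_set ({\<bar>b k - b (k - 1)\<bar> | k. k \<in> {1..<w}} \<union> {\<bar>1 + b (w - 1) - b 0\<bar>}) \<and>
         (\<forall>d\<in>{\<bar>b k - b (k - 1)\<bar> | k. k \<in> {1..<w}} \<union> {\<bar>1 + b (w - 1) - b 0\<bar>}. d > 0)"
proof -
  note mono = assms(2)
  define A where "A = {\<bar>b k - b (k - 1)\<bar> | k. k \<in> {1..<w}} \<union> {\<bar>1 + b (w - 1) - b 0\<bar>}"
  have memK: "x \<in> K' \<longleftrightarrow> (\<exists>k<w. real_of_int (b k) + lam k \<le> x \<and> x \<le> real_of_int (b k) + lam (k + 1))" for x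
    using assms(6) by auto
  have compK: "compact K'"
    unfolding assms(6) by (rule compact_UN) auto
  have cover: "\<exists>y\<in>K'. x - y \<in> \<int>" for x :: real
  proof -
    define t where "t = x - of_int (floor (x - lam 0))"
    have t1: "lam 0 \<le> t" "t < lam 0 + 1" unfolding t_def
      by (linarith, linarith)
    define S where "S = {k. k < w \<and> lam k \<le> t}"
    have "0 \<in> S" using assms(1) t1 by (simp add: S_def)
    have fS: "finite S" unfolding S_def by simp
    define k where "k = Max S"
    have kS: "k \<in> S" using fS \<open>0 \<in> S\<close> unfolding k_def by (auto intro: Max_in)
    have kmax: "\<And>j. j \<in> S \<Longrightarrow> j \<le> k" using fS unfolding k_def by simp
    have kw: "k < w" and lk: "lam k \<le> t" using kS by (auto simp: S_def)
    have "t \<le> lam (k + 1)"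
    proof (cases "k + 1 = w")
      case True then show ?thesis using assms(3) t1 by simp
    next
      case False
      then have "k + 1 < w" using kw by simp
      moreover have "k + 1 \<notin> S" using kmax by fastforce
      ultimately show ?thesis by (simp add: S_def)
    qed
    then have "real_of_int (b k) + t \<in> K'" using memK kw lk by auto
    moreover have "x - (real_of_int (b k) + t) \<in> \<int>"
      unfolding t_def by simp
    ultimately show ?thesis by blast
  qed
  have Nset: "N_set K'"
    unfolding N_set_def using compK cover by (simp add: Basis_real_def)
  have pos: "\<forall>d\<in>A. d > 0"
    unfolding A_def using assms(4,5) by (auto, metis atLeastLessThan_iff)
  have sup: "A \<subseteq> {n::int. n > 0 \<and> real_of_int n \<in> diff_set K'}"
  proof
    fix n assume nA: "n \<in> A"
    have "n > 0" using pos nA by blast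
    moreover have "real_of_int n \<in> diff_set K'"
    proof (cases "n = \<bar>1 + b (w - 1) - b 0\<bar>")
      case True
      have w1: "w - 1 + 1 = w" "w - 1 < w" using assms(1) by auto
      have x: "real_of_int (b (w-1)) + lam w \<in> K'"
        using memK w1 lam_le[OF mono, of "w-1" w] by (metis add.commute le_add2 order_refl add_le_cancel_left)
      have y: "real_of_int (b 0) + lam 0 \<in> K'"
        using memK assms(1) lam_le[OF mono, of 0 1] by (auto intro!: exI[of _ 0])
      have e1: "(real_of_int (b (w-1)) + lam w) - (real_of_int (b 0) + lam 0) = of_int (1 + b (w - 1) - b 0)"
        using assms(3) by simp
      have e2: "(real_of_int (b 0) + lam 0) - (real_of_int (b (w-1)) + lam w) = - of_int (1 + b (w - 1) - b 0)"
        using assms(3) by simp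
      show ?thesis
      proof (cases "1 + b (w - 1) - b 0 \<ge> 0")
        case c: True
        show ?thesis unfolding diff_set_def using x y e1 True c by (intro CollectI exI[of _ "real_of_int (b (w-1)) + lam w"] exI[of _ "real_of_int (b 0) + lam 0"]) simp
      next
        case c: False
        show ?thesis unfolding diff_set_def using x y e2 True c by (intro CollectI exI[of _ "real_of_int (b 0) + lam 0"] exI[of _ "real_of_int (b (w-1)) + lam w"]) simp
      qed
    next
      case False
      then obtain k where k: "k \<in> {1..<w}" "n = \<bar>b k - b (k - 1)\<bar>" using nA unfolding A_def by blast
      have kk: "k - 1 + 1 = k" "k - 1 < w" "k < w" using k by auto
      have x: "real_of_int (b k) + lam k \<in> K'"
        using memK kk lam_le[OF mono, of k "k+1"] by auto
      have y: "real_of_int (b (k-1)) + lam k \<in> K'"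
        using memK kk lam_le[OF mono, of "k-1" k] by (auto intro!: exI[of _ "k-1"])
      show ?thesis
      proof (cases "b k - b (k - 1) \<ge> 0")
        case c: True
        show ?thesis unfolding diff_set_def using x y k c by (intro CollectI exI[of _ "real_of_int (b k) + lam k"] exI[of _ "real_of_int (b (k-1)) + lam k"]) simp
      next
        case c: False
        show ?thesis unfolding diff_set_def using x y k c by (intro CollectI exI[of _ "real_of_int (b (k-1)) + lam k"] exI[of _ "real_of_int (b k) + lam k"]) simp
      qed
    qed
    ultimately show "n \<in> {n::int. n > 0 \<and> real_of_int n \<in> diff_set K'}" by simp
  qed
  have sub: "{n::int. n > 0 \<and> real_of_int n \<in> diff_set K'} \<subseteq> A"
  proof
    fix n assume "n \<in> {n::int. n > 0 \<and> real_of_int n \<in> diff_set K'}"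
    then have n0: "n > 0" and "real_of_int n \<in> diff_set K'" by auto
    then obtain x y where xy: "x \<in> K'" "y \<in> K'" "real_of_int n = x - y" unfolding diff_set_def by auto
    obtain k where k: "k < w" "real_of_int (b k) + lam k \<le> x" "x \<le> real_of_int (b k) + lam (k + 1)"
      using xy(1) memK by auto
    obtain j where j: "j < w" "real_of_int (b j) + lam j \<le> y" "y \<le> real_of_int (b j) + lam (j + 1)"
      using xy(2) memK by auto
    define s where "s = x - b k"
    define t where "t = y - b j"
    define m where "m = n - b k + b j"
    have smt: "s - t = real_of_int m" unfolding s_def t_def m_def using xy(3) by simp
    have bk: "lam 0 \<le> lam k" "lam (k+1) \<le> lam w" using lam_le[OF mono, of 0 k] lam_le[OF mono, of "k+1" w] k by auto
    have bj: "lam 0 \<le> lam j" "lam (j+1) \<le> lam w" using lam_le[OF mono, of 0 j] lam_le[OF mono, of "j+1" w] j by auto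
    have sb: "lam k \<le> s" "s \<le> lam (k+1)" using k unfolding s_def by auto
    have tb: "lam j \<le> t" "t \<le> lam (j+1)" using j unfolding t_def by auto
    have "real_of_int m \<le> 1" "real_of_int m \<ge> -1" using smt sb tb bk bj assms(3) by linarith+
    then have "m \<le> 1" "m \<ge> -1" by linarith+
    then have mc: "m = 0 \<or> m = 1 \<or> m = -1" by linarith
    show "n \<in> A"
    proof -
      { assume m0: "m = 0"
        have st: "s = t" using smt m0 by simp
        have "k \<noteq> j" using m0 n0 unfolding m_def by auto
        then consider "k < j" | "j < k" by linarith
        then have ?thesis
        proof cases
          case 1
          have "lam j \<le> lam (k+1)" using st sb tb by linarith
          then have "\<not> (k + 1 < j)" using lam_mono[OF mono, of "k+1" j] j by linarith
          then have jk: "j = k + 1" using 1 by simp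
          have "n = b k - b j" using m0 unfolding m_def by simp
          then have "n = \<bar>b j - b (j - 1)\<bar>" using jk n0 by simp
          then show ?thesis unfolding A_def using jk j by auto
        next
          case 2
          have "lam k \<le> lam (j+1)" using st sb tb by linarith
          then have "\<not> (j + 1 < k)" using lam_mono[OF mono, of "j+1" k] k by linarith
          then have jk: "k = j + 1" using 2 by simp
          have "n = b k - b j" using m0 unfolding m_def by simp
          then have "n = \<bar>b k - b (k - 1)\<bar>" using jk n0 by simp
          then show ?thesis unfolding A_def using jk k by auto
        qed }
      moreover
      { assume m1: "m = 1"
        have "s = t + 1" using smt m1 by simp
        then have "lam (k+1) = lam w" "lam j = lam 0" using sb tb bk bj assms(3) by linarith+
        then have "k + 1 = w" "j = 0" using lam_inj[OF mono] k j by auto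
        then have "n = 1 + b (w - 1) - b 0" using m1 unfolding m_def by auto
        then have ?thesis unfolding A_def using n0 by auto }
      moreover
      { assume m1: "m = -1"
        have "t = s + 1" using smt m1 by simp
        then have "lam (j+1) = lam w" "lam k = lam 0" using sb tb bk bj assms(3) by linarith+
        then have "j + 1 = w" "k = 0" using lam_inj[OF mono] k j by auto
        then have "n = - (1 + b (w - 1) - b 0)" using m1 unfolding m_def by auto
        then have ?thesis unfolding A_def using n0 by auto }
      ultimately show ?thesis using mc by blast
    qed
  qed
  have fin: "finite A"
  proof -
    have "{\<bar>b k - b (k - 1)\<bar> | k. k \<in> {1..<w}} = (\<lambda>k. \<bar>b k - b (k - 1)\<bar>) ` {1..<w}" by auto
    then show ?thesis unfolding A_def by simp
  qed
  have rp: "rel_prime_set A"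
    unfolding rel_prime_set_def
  proof (intro conjI allI impI)
    show "A \<noteq> {}" unfolding A_def by simp
    fix d :: int assume d1: "d > 1"
    show "\<not> (\<forall>s\<in>A. d dvd s)"
    proof
      assume all: "\<forall>s\<in>A. d dvd s"
      have step: "d dvd b k - b (k - 1)" if "k \<in> {1..<w}" for k
        using all that unfolding A_def by auto
      have last: "d dvd 1 + b (w - 1) - b 0" using all unfolding A_def by auto
      have tel: "m < w \<Longrightarrow> d dvd b m - b 0" for m
      proof (induction m)
        case 0 then show ?case by simp
      next
        case (Suc m)
        have "d dvd b (Suc m) - b m" using step[of "Suc m"] Suc.prems by simp
        moreover have "d dvd b m - b 0" using Suc by simp
        ultimately have "d dvd (b (Suc m) - b m) + (b m - b 0)" by (rule dvd_add)
        then show ?case by simp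
      qed
      have "d dvd b (w - 1) - b 0" using tel assms(1) by simp
      with last have "d dvd (1 + b (w - 1) - b 0) - (b (w - 1) - b 0)" by (rule dvd_diff)
      then have "d dvd 1" by simp
      then show False using d1 by simp
    qed
  qed
  show ?thesis using Nset sub sup fin rp pos unfolding A_def[symmetric] by blast
qed

end
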